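(* Let $f$ be the solution of the radial Loewner PDE $$\frac{\partial f}{\partial t}(z,t)=-z f'(z,t)\,\frac{e^{it}+z}{e^{it}-z},\qquad f(z,0)=z,$$ on $\mathbb{D}\times[0,\infty)$, and let $\gamma(t)=f(e^{it},t)=\phi^{-1}(e^{(i-1)t}\phi(1))$ with $\phi(z)=z(z-i)^{i-1}$. Then $\gamma$ leaves the unit circle orthogonally at $1$: $\lim_{t\to0^+}\operatorname{Arg}(1-\gamma(t))=0$.
   Context: $\mathbb{D}$ is the unit disc, $f'=\partial f/\partial z$; $\phi$ is univalent on $\mathbb{D}$ with the power defined via a holomorphic branch of $\log(z-i)$ on $\mathbb{D}$. $\operatorname{Arg}$ denotes the principal argument. *)

theory Defs
  imports "HOL-Analysis.Analysis"
begin

text \<open>phi(z) = z (z - i)^(i - 1), the power taken via the principal logarithm of z - i,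
  which is holomorphic on the unit disc (z - i lies in the open lower half plane there)
  and continuous up to z = 1.\<close>
definition phi :: "complex \<Rightarrow> complex" where
  "phi z = z * (z - \<i>) powr (\<i> - 1)"

definition gamma :: "real \<Rightarrow> complex" where
  "gamma t = inv_into (ball 0 1) phi (exp ((\<i> - 1) * complex_of_real t) * phi 1)"

end

theory Submission imports Defs begin

lemma re_pos: fixes e :: complex assumes "norm e < 1"
  shows "Re ((1 + \<i>) * (1 + (\<i> - 1) * e / (e - \<i>))) > 0"
proof -
  have ne: "e - \<i> \<noteq> 0" using assms by auto
  have eq: "(1 + \<i>) * (1 + (\<i> - 1) * e / (e - \<i>)) = (\<i> - 1) * (e - 1) / (e - \<i>)"
    using ne by (simp add: field_simps)
  have n2: "(cmod (e - \<i>))^2 = Re e ^ 2 + (Im e - 1)^2" by (simp add: cmod_power2)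
  have "(cmod e)^2 < 1" using assms norm_ge_zero[of e]
    by (simp add: power2_eq_square) (metis less_eq_real_def mult_le_one mult_less_cancel_right1 norm_ge_zero not_less)
  then have "Re e ^ 2 + Im e ^ 2 < 1" by (simp add: cmod_power2)
  moreover have "(norm (e - \<i>))^2 > 0" using ne by simp
  ultimately show ?thesis unfolding eq Re_divide' n2
    by (simp add: algebra_simps power2_eq_square)
qed

definition H :: "complex \<Rightarrow> complex" where
  "H z = z + (\<i> - 1) * Ln (exp z - \<i>)"

lemma notnp: assumes "Re z < 0" shows "exp z - \<i> \<notin> \<real>\<^sub>\<le>\<^sub>0"
proof -
  have "Im (exp z) \<le> exp (Re z)" using abs_Im_le_cmod[of "exp z"] by simp
  moreover have "exp (Re z) < 1" using assms by simp
  ultimately have "Im (exp z) < 1" by linarith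
  then have "Im (exp z - \<i>) < 0" by simp
  then show ?thesis by (auto simp: complex_nonpos_Reals_iff)
qed

lemma H_deriv: assumes "Re z < 0"
  shows "(H has_field_derivative (1 + (\<i> - 1) * exp z / (exp z - \<i>))) (at z)"
proof -
  have "((\<lambda>z. Ln (exp z - \<i>)) has_field_derivative (inverse (exp z - \<i>) * exp z)) (at z)"
    by (rule DERIV_chain2[where g="\<lambda>z. exp z - \<i>" and x=z, OF has_field_derivative_Ln[OF notnp[OF assms]]])
       (auto intro!: derivative_eq_intros)
  from DERIV_add[OF DERIV_ident DERIV_cmult[OF this, of "\<i> - 1"]] show ?thesis
    unfolding H_def[abs_def] by (simp add: field_simps)
qed

lemma H_inj: assumes "Re a < 0" "Re b < 0" "H a = H b" shows "a = b"
proof (rule ccontr)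
  assume "a \<noteq> b"
  define d where "d = b - a"
  have dnz: "d \<noteq> 0" using \<open>a \<noteq> b\<close> by (simp add: d_def)
  define g where "g x = Re ((1 + \<i>) * H (a + of_real x * d) / d)" for x :: real
  have "g 0 < g 1"
  proof (rule DERIV_pos_imp_increasing[where f=g])
    fix x :: real assume x: "0 \<le> x" "x \<le> 1"
    define z where "z = a + of_real x * d"
    have "Re z = (1 - x) * Re a + x * Re b" by (simp add: z_def d_def algebra_simps)
    also have "\<dots> < 0"
    proof (cases "x = 0")
      case True then show ?thesis using assms by simp
    next
      case False
      then have "x > 0" using x by simp
      have "(1 - x) * Re a \<le> 0" using x assms by (simp add: mult_nonneg_nonpos)
      moreover have "x * Re b < 0" using \<open>x > 0\<close> assms by (simp add: mult_pos_neg)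
      ultimately show ?thesis by linarith
    qed
    finally have rz: "Re z < 0" .
    have "((\<lambda>w. (1 + \<i>) * H (a + w * d) / d) has_field_derivative
           ((1 + \<i>) * ((1 + (\<i> - 1) * exp z / (exp z - \<i>)) * d) / d)) (at (of_real x))"
      using H_deriv[OF rz] unfolding z_def
      by (auto intro!: derivative_eq_intros DERIV_chain2[where f=H])
    then have "((\<lambda>x. (1 + \<i>) * H (a + of_real x * d) / d) has_vector_derivative
           ((1 + \<i>) * (1 + (\<i> - 1) * exp z / (exp z - \<i>)))) (at x)"
      using dnz by (auto dest!: has_vector_derivative_real_field)
    then have "(g has_field_derivative Re ((1 + \<i>) * (1 + (\<i> - 1) * exp z / (exp z - \<i>)))) (at x)"
      using has_field_derivative_Re unfolding g_def[abs_def] by blast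
    moreover have "Re ((1 + \<i>) * (1 + (\<i> - 1) * exp z / (exp z - \<i>))) > 0"
      by (rule re_pos) (simp add: rz)
    ultimately show "\<exists>y. DERIV g x :> y \<and> 0 < y" by blast
  qed simp
  moreover have "g 0 = g 1" using assms(3) by (simp add: g_def d_def)
  ultimately show False by simp
qed

lemma phi_exp: assumes "z \<noteq> 0" "z \<noteq> \<i>"
  shows "phi z = exp (Ln z + (\<i> - 1) * Ln (z - \<i>))"
  using assms by (simp add: phi_def powr_def exp_add)

lemma phi_zero_iff: assumes "z \<noteq> \<i>" shows "phi z = 0 \<longleftrightarrow> z = 0"
  using assms by (simp add: phi_def powr_def)

lemma phi_H: assumes "z \<noteq> 0" "z \<noteq> \<i>" shows "phi z = exp (H (Ln z))"
  using phi_exp[OF assms] assms by (simp add: H_def)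

lemma phi_inj: "inj_on phi (ball 0 1)"
proof (rule inj_onI)
  fix z1 z2 assume z1: "z1 \<in> ball 0 1" and z2: "z2 \<in> ball 0 1" and eq: "phi z1 = phi z2"
  have ni: "z1 \<noteq> \<i>" "z2 \<noteq> \<i>" using z1 z2 by auto
  show "z1 = z2"
  proof (cases "z1 = 0 \<or> z2 = 0")
    case True then show ?thesis using eq phi_zero_iff[OF ni(1)] phi_zero_iff[OF ni(2)] by metis
  next
    case False
    then have nz: "z1 \<noteq> 0" "z2 \<noteq> 0" by auto
    define a where "a = Ln z1"
    define b where "b = Ln z2"
    have ra: "Re a < 0" using z1 nz by (simp add: a_def Re_Ln)
    have rb: "Re b < 0" using z2 nz by (simp add: b_def Re_Ln)
    have "exp (H a) = exp (H b)" using eq phi_H[OF nz(1) ni(1)] phi_H[OF nz(2) ni(2)]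
      by (simp add: a_def b_def)
    then obtain n :: int where n: "H a = H b + of_int (2 * n) * pi * \<i>"
      using exp_eq[of "H a" "H b"] by blast
    define b' where "b' = b + of_int (2 * n) * pi * \<i>"
    have eb: "exp b' = exp b" using exp_eq[of b' b] b'_def by blast
    have "H b' = b' + (\<i> - 1) * Ln (exp b - \<i>)" by (simp only: H_def eb)
    also have "\<dots> = H b + of_int (2 * n) * pi * \<i>" by (simp add: H_def b'_def)
    finally have "H a = H b'" using n by simp
    moreover have "Re b' < 0" using rb by (simp add: b'_def)
    ultimately have "a = b'" using H_inj[OF ra] by blast
    then have "exp a = exp b" using eb by simp
    then show ?thesis using nz by (simp add: a_def b_def)
  qed
qed

definition K :: "complex \<Rightarrow> complex" where
  "K z = Ln z + (\<i> - 1) * Ln (z - \<i>) - (\<i> - 1) * Ln (1 - \<i>)"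

definition R :: "complex \<Rightarrow> complex" where
  "R z = K z - ((\<i> - 1) / 4) * (z - 1)^2"

definition good :: "complex \<Rightarrow> bool" where
  "good w \<longleftrightarrow> Re w > 0 \<and> Im w < 1"

lemma good_np: assumes "good w" shows "w \<notin> \<real>\<^sub>\<le>\<^sub>0" "w - \<i> \<notin> \<real>\<^sub>\<le>\<^sub>0" "w \<noteq> 0" "w \<noteq> \<i>"
  using assms by (auto simp: good_def complex_nonpos_Reals_iff)

lemma R_deriv: assumes "good w"
  shows "(R has_field_derivative ((1 - \<i>) * (w - 1)^2 * (w + 1 - \<i>) / (2 * w * (w - \<i>)))) (at w)"
proof -
  note np = good_np[OF assms]
  have d1: "((\<lambda>z. Ln (z - \<i>)) has_field_derivative (inverse (w - \<i>) * 1)) (at w)"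
    by (rule DERIV_chain2[where g="\<lambda>z. z - \<i>" and x=w, OF has_field_derivative_Ln[OF np(2)]])
       (auto intro!: derivative_eq_intros)
  have d2: "((\<lambda>z. ((\<i> - 1) / 4) * (z - 1)^2) has_field_derivative ((\<i> - 1) / 4) * (2 * (w - 1))) (at w)"
    by (auto intro!: derivative_eq_intros)
  have "(R has_field_derivative (inverse w + (\<i> - 1) * (inverse (w - \<i>) * 1) - 0 - ((\<i> - 1) / 4) * (2 * (w - 1)))) (at w)"
    unfolding R_def[abs_def] K_def
    by (intro DERIV_diff DERIV_add DERIV_cmult d1 d2 has_field_derivative_Ln[OF np(1)] DERIV_const)
  moreover have "inverse w + (\<i> - 1) * (inverse (w - \<i>) * 1) - 0 - ((\<i> - 1) / 4) * (2 * (w - 1))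
      = (1 - \<i>) * (w - 1)^2 * (w + 1 - \<i>) / (2 * w * (w - \<i>))"
    using np by (simp add: field_simps) (simp add: algebra_simps power2_eq_square power3_eq_cube)
  ultimately show ?thesis by simp
qed

lemma R_deriv_bound: assumes "cmod (w - 1) \<le> 1/2"
  shows "cmod ((1 - \<i>) * (w - 1)^2 * (w + 1 - \<i>) / (2 * w * (w - \<i>))) \<le> 16 * (cmod (w - 1))^2"
proof -
  have re: "\<bar>Re w - 1\<bar> \<le> 1/2" using abs_Re_le_cmod[of "w - 1"] assms by simp
  have im: "\<bar>Im w\<bar> \<le> 1/2" using abs_Im_le_cmod[of "w - 1"] assms by simp
  have n1: "cmod (w + 1 - \<i>) \<le> 4"
    using cmod_le[of "w + 1 - \<i>"] re im by (simp add: abs_le_iff, linarith)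
  have n2: "cmod w \<ge> 1/2" using abs_Re_le_cmod[of w] re by (simp add: abs_le_iff, linarith)
  have n3: "cmod (w - \<i>) \<ge> 1/2" using abs_Im_le_cmod[of "w - \<i>"] im by simp
  have n4: "cmod (1 - \<i>) \<le> 2" using cmod_le[of "1 - \<i>"] by simp
  have "cmod (2 * w * (w - \<i>)) \<ge> 1/2"
  proof -
    have "cmod w * cmod (w - \<i>) \<ge> 1/2 * (1/2)" using n2 n3 by (intro mult_mono) auto
    then show ?thesis by (simp add: norm_mult)
  qed
  then have "cmod ((1 - \<i>) * (w - 1)^2 * (w + 1 - \<i>) / (2 * w * (w - \<i>)))
      \<le> 2 * (cmod (w - 1))^2 * 4 / (1/2)"
    unfolding norm_divide norm_mult norm_power
    by (intro frac_le mult_mono n1 n4) auto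
  then show ?thesis by simp
qed

lemma R_one: "R 1 = 0" by (simp add: R_def K_def)

lemma R_bound: assumes "cmod (z - 1) \<le> 1/2"
  shows "cmod (R z) \<le> 16 * (cmod (z - 1))^3"
proof -
  define r where "r = cmod (z - 1)"
  have "cmod (R z - R 1) \<le> (16 * r^2) * cmod (z - 1)"
  proof (rule field_differentiable_bound[where S="cball 1 r"])
    fix w :: complex assume w: "w \<in> cball 1 r"
    then have wr: "cmod (w - 1) \<le> r" by (simp add: dist_norm norm_minus_commute)
    then have w2: "cmod (w - 1) \<le> 1/2" using assms r_def by simp
    have "good w" using abs_Re_le_cmod[of "w - 1"] abs_Im_le_cmod[of "w - 1"] w2
      unfolding good_def by (simp add: abs_le_iff)
    then show "(R has_field_derivative ((1 - \<i>) * (w - 1)^2 * (w + 1 - \<i>) / (2 * w * (w - \<i>)))) (at w within cball 1 r)"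
      using R_deriv has_field_derivative_at_within by blast
    have "cmod ((1 - \<i>) * (w - 1)^2 * (w + 1 - \<i>) / (2 * w * (w - \<i>))) \<le> 16 * (cmod (w - 1))^2"
      by (rule R_deriv_bound[OF w2])
    also have "\<dots> \<le> 16 * r^2" using wr by (simp add: power_mono)
    finally show "cmod ((1 - \<i>) * (w - 1)^2 * (w + 1 - \<i>) / (2 * w * (w - \<i>))) \<le> 16 * r^2" .
  qed (auto simp: r_def dist_norm norm_minus_commute)
  then show ?thesis by (simp add: R_one r_def power3_eq_cube power2_eq_square mult.assoc)
qed

lemma csqrt_close: assumes "0 < r" "cmod (x - of_real (r^2)) \<le> d"
  shows "cmod (csqrt x - of_real r) \<le> d / r"
proof -
  have eq: "(csqrt x - of_real r) * (csqrt x + of_real r) = x - of_real (r^2)"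
    by (simp add: algebra_simps power2_eq_square[symmetric])
  have "r \<le> Re (csqrt x + of_real r)" using Re_csqrt[of x] by simp
  also have "\<dots> \<le> cmod (csqrt x + of_real r)" by (rule complex_Re_le_cmod)
  finally have ge: "r \<le> cmod (csqrt x + of_real r)" .
  have "cmod (csqrt x - of_real r) * r \<le> cmod (csqrt x - of_real r) * cmod (csqrt x + of_real r)"
    using ge by (intro mult_left_mono) auto
  also have "\<dots> = cmod (x - of_real (r^2))" using eq by (metis norm_mult)
  also have "\<dots> \<le> d" by (rule assms(2))
  finally show ?thesis using assms(1) by (simp add: field_simps)
qed

lemma good_near: assumes "cmod (w - 1) \<le> 1/2" shows "good w"
  using abs_Re_le_cmod[of "w - 1"] abs_Im_le_cmod[of "w - 1"] assms
  unfolding good_def by (simp add: abs_le_iff)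

lemma exist_sol: assumes e: "0 < e" "e \<le> 1/2" and s: "0 < s" "s \<le> e/1000"
  shows "\<exists>z. cmod (z - of_real (1 - 2 * s)) \<le> e * s \<and> K z = (\<i> - 1) * of_real (s^2)"
proof -
  define a :: complex where "a = (\<i> - 1) / 4"
  define c :: complex where "c = of_real (1 - 2 * s)"
  define T where "T z = 1 - csqrt (of_real (4 * s^2) - R z / a)" for z
  have na: "cmod a \<ge> 1/4" using abs_Re_le_cmod[of a] by (simp add: a_def)
  have anz: "a \<noteq> 0" by (simp add: a_def)
  have key: "cmod (z - 1) \<le> 1/2 \<and> cmod (R z / a) \<le> 2*e * s^2" if z: "z \<in> cball c (e * s)" for z
  proof -
    have t1: "cmod (z - 1) \<le> cmod (z - c) + cmod (c - 1)"
      using norm_triangle_ineq[of "z - c" "c - 1"] by simp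
    have t2: "cmod (z - c) \<le> e * s" using z by (simp add: dist_norm norm_minus_commute)
    have t3: "cmod (c - 1) = 2 * s" using s by (simp add: c_def)
    have z0: "cmod (z - 1) \<le> e * s + 2 * s" using t1 t2 t3 by linarith
    have "e * s \<le> 1 * s" using e s by (intro mult_right_mono) auto
    then have z1: "cmod (z - 1) \<le> 3 * s" using z0 by simp
    then have z2: "cmod (z - 1) \<le> 1/2" using e s by simp
    have "cmod (R z) \<le> 16 * (cmod (z - 1))^3" by (rule R_bound[OF z2])
    also have "\<dots> \<le> 16 * (3 * s)^3" using z1 by (intro mult_left_mono power_mono) auto
    finally have "cmod (R z) \<le> 432 * s^3" by simp
    then have "cmod (R z / a) \<le> 432 * s^3 / (1/4)" unfolding norm_divide
      using na s by (intro frac_le) auto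
    also have "\<dots> = 1728 * s * s^2" by (simp add: power2_eq_square power3_eq_cube)
    also have "\<dots> \<le> 2*e * s^2" using s e by (intro mult_right_mono) auto
    finally show ?thesis using z2 by simp
  qed
  have cont: "continuous_on (cball c (e * s)) T"
  proof (rule continuous_at_imp_continuous_on, rule ballI)
    fix z assume z: "z \<in> cball c (e * s)"
    note k = key[OF z]
    have "isCont R z" using R_deriv[OF good_near] k DERIV_isCont by blast
    moreover have "of_real (4 * s^2) - R z / a \<notin> \<real>\<^sub>\<le>\<^sub>0"
    proof -
      have "Re (R z / a) \<le> 2*e * s^2" using k abs_Re_le_cmod[of "R z / a"] by linarith
      moreover have "2*e * s^2 < 4 * s^2" using e s by (simp add: power2_eq_square)
      ultimately have "Re (of_real (4 * s^2) - R z / a) > 0" by simp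
      then show ?thesis by (auto simp: complex_nonpos_Reals_iff)
    qed
    ultimately have "isCont (\<lambda>x. csqrt (of_real (4 * s^2) - R x / a)) z"
      using anz by (intro isCont_csqrt') (auto intro!: continuous_intros)
    then show "isCont T z" unfolding T_def by (auto intro!: continuous_intros)
  qed
  have maps: "T \<in> cball c (e * s) \<rightarrow> cball c (e * s)"
  proof
    fix z assume z: "z \<in> cball c (e * s)"
    note k = key[OF z]
    have "cmod (of_real (4 * s^2) - R z / a - of_real ((2 * s)^2)) \<le> 2*e * s^2"
      using k by (simp add: power2_eq_square)
    then have "cmod (csqrt (of_real (4 * s^2) - R z / a) - of_real (2 * s)) \<le> 2*e * s^2 / (2 * s)"
      using s by (intro csqrt_close) auto
    also have "\<dots> = e * s" using s by (simp add: power2_eq_square)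
    finally have "cmod (c - T z) \<le> e * s"
      by (simp add: T_def c_def norm_minus_commute algebra_simps)
    then show "T z \<in> cball c (e * s)" by (simp add: dist_norm)
  qed
  obtain z where z: "z \<in> cball c (e * s)" and fz: "T z = z"
    using brouwer_ball[of "e * s" c T] cont maps e s by auto
  have "csqrt (of_real (4 * s^2) - R z / a) = 1 - z" using fz by (simp add: T_def algebra_simps)
  then have "of_real (4 * s^2) - R z / a = (1 - z)^2" by (metis power2_csqrt)
  then have "R z = a * (of_real (4 * s^2) - (z - 1)^2)" using anz
    by (simp add: field_simps power2_commute)
  then have "4 * K z = 4 * ((\<i> - 1) * of_real (s^2))"
    by (simp add: R_def a_def algebra_simps)
  then have "K z = (\<i> - 1) * of_real (s^2)" by simp
  moreover have "cmod (z - of_real (1 - 2 * s)) \<le> e * s"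
    using z by (simp add: c_def dist_norm norm_minus_commute)
  ultimately show ?thesis by blast
qed

lemma gamma_close: assumes e: "0 < e" "e \<le> 1/2" and t: "0 < t" "sqrt t \<le> e/1000"
  shows "cmod ((1 - gamma t) - of_real (2 * sqrt t)) \<le> e * sqrt t"
proof -
  define s where "s = sqrt t"
  have s: "0 < s" "s \<le> e/1000" using t by (auto simp: s_def)
  obtain z where zc: "cmod (z - of_real (1 - 2 * s)) \<le> e * s"
    and kz: "K z = (\<i> - 1) * of_real (s^2)"
    using exist_sol[OF e s] by blast
  have s2: "s^2 = t" using t by (simp add: s_def)
  have es: "e * s \<le> 1 * s" using e s by (intro mult_right_mono) auto
  have "cmod z \<le> cmod (z - of_real (1 - 2 * s)) + cmod (of_real (1 - 2 * s) :: complex)"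
    using norm_triangle_ineq[of "z - of_real (1 - 2 * s)" "of_real (1 - 2 * s)"] by simp
  also have "cmod (of_real (1 - 2 * s) :: complex) = 1 - 2 * s"
  proof -
    have "0 \<le> 1 - 2 * s" using s e by simp
    then show ?thesis by (simp only: norm_of_real abs_of_nonneg)
  qed
  finally have "cmod z < 1" using zc es s by linarith
  then have zin: "z \<in> ball 0 1" by simp
  have "cmod (z - 1) \<le> cmod (z - of_real (1 - 2 * s)) + cmod (of_real (1 - 2 * s) - 1 :: complex)"
    using norm_triangle_ineq[of "z - of_real (1 - 2 * s)" "of_real (1 - 2 * s) - 1"] by simp
  also have "cmod (of_real (1 - 2 * s) - 1 :: complex) = 2 * s" using s by simp
  finally have "cmod (z - 1) \<le> 1/2" using zc es s e by linarith
  note g = good_np[OF good_near[OF this]]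
  have "phi z = exp (K z + (\<i> - 1) * Ln (1 - \<i>))"
    using phi_exp[OF g(3,4)] by (simp add: K_def)
  also have "\<dots> = exp ((\<i> - 1) * of_real t) * phi 1"
    using phi_exp[of 1] by (simp add: kz s2 exp_add)
  finally have "gamma t = z" unfolding gamma_def using inv_into_f_f[OF phi_inj zin] by simp
  then show ?thesis using zc by (simp add: s_def norm_minus_commute algebra_simps)
qed

theorem proposition3p2:
  shows "((\<lambda>t. Arg (1 - gamma t)) \<longlongrightarrow> 0) (at_right 0)"
proof -
  define v where "v t = (1 - gamma t) / of_real (2 * sqrt t)" for t
  have vlim: "(v \<longlongrightarrow> 1) (at_right 0)"
  proof (rule tendstoI)
    fix e :: real assume "0 < e"
    define e' where "e' = min (1/2) e"
    have e': "0 < e'" "e' \<le> 1/2" "e' \<le> e" using \<open>0 < e\<close> by (auto simp: e'_def)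
    have "\<forall>t>0. t < (e'/1000)^2 \<longrightarrow> dist (v t) 1 < e"
    proof (intro allI impI)
      fix t :: real assume t: "0 < t" "t < (e'/1000)^2"
      have "sqrt t < sqrt ((e'/1000)^2)" using t by (intro real_sqrt_less_mono)
      then have st: "sqrt t \<le> e'/1000" using e' by simp
      have sp: "0 < sqrt t" using t by simp
      have c: "cmod ((1 - gamma t) - of_real (2 * sqrt t)) \<le> e' * sqrt t"
        by (rule gamma_close[OF e'(1,2) t(1) st])
      have "v t - 1 = ((1 - gamma t) - of_real (2 * sqrt t)) / of_real (2 * sqrt t)"
        using sp by (simp add: v_def field_simps)
      then have "dist (v t) 1 = cmod ((1 - gamma t) - of_real (2 * sqrt t)) / (2 * sqrt t)"
        using sp by (simp add: dist_norm norm_divide)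
      also have "\<dots> \<le> e' * sqrt t / (2 * sqrt t)" using c sp by (intro divide_right_mono) auto
      also have "\<dots> = e' / 2" using sp by simp
      also have "\<dots> < e" using e' by simp
      finally show "dist (v t) 1 < e" .
    qed
    moreover have "(0::real) < (e'/1000)^2" using e' by simp
    ultimately have "\<exists>b>0. \<forall>t>0. t < b \<longrightarrow> dist (v t) 1 < e" by blast
    then show "\<forall>\<^sub>F t in at_right 0. dist (v t) 1 < e"
      by (simp only: eventually_at_right_field)
  qed
  have "isCont Arg 1" by (rule continuous_at_Arg) (simp add: complex_nonpos_Reals_iff)
  from isCont_tendsto_compose[OF this vlim]
  have "((\<lambda>t. Arg (v t)) \<longlongrightarrow> Arg 1) (at_right 0)" .
  then have lim: "((\<lambda>t. Arg (v t)) \<longlongrightarrow> 0) (at_right 0)" by simp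
  have ev: "\<forall>\<^sub>F t in at_right 0. Arg (v t) = Arg (1 - gamma t)"
    using eventually_at_right_less[of "0::real"]
  proof (rule eventually_mono)
    fix t :: real assume "0 < t"
    then have "v t = of_real (1 / (2 * sqrt t)) * (1 - gamma t)" by (simp add: v_def field_simps)
    moreover have "0 < 1 / (2 * sqrt t)" using \<open>0 < t\<close> by simp
    ultimately show "Arg (v t) = Arg (1 - gamma t)" by (simp only: Arg_times_of_real)
  qed
  show ?thesis using lim unfolding tendsto_cong[OF ev] .
qed
end
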